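(* Let $\sigma>0$ and $\mu>0$, and consider the single-dimensional population EM iteration $$\lambda^{(t+1)} = M(\lambda^{(t)},\mu) := \mathbb{E}_{x\sim\mathcal{N}(\mu,\sigma^2)}\left[\tanh\left(\frac{\lambda^{(t)} x}{\sigma^2}\right) x\right],\qquad t\ge 0,$$ started from some $\lambda^{(0)}>0$. Then for every $t\ge 0$, $$|\lambda^{(t+1)}-\mu| \le \kappa^{(t)}\, |\lambda^{(t)}-\mu|, \qquad \text{where } \kappa^{(t)} = \exp\left(-\frac{\min(\lambda^{(t)},\mu)^2}{2\sigma^2}\right).$$ Moreover, $\kappa^{(t)}$ is a decreasing function of $t$.
   Context: This iteration is the population (infinite-sample) EM algorithm for estimating the parameter $\mu$ of the symmetric mixture $\tfrac12\mathcal{N}(\mu,\sigma^2)+\tfrac12\mathcal{N}(-\mu,\sigma^2)$ on $\mathbb{R}$ with known variance $\sigma^2$; $\lambda^{(t)}$ is the current estimate of $\mu$. *)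

theory Defs
  imports "HOL-Probability.Probability"
begin

text \<open>Population EM operator for the symmetric two-component Gaussian mixture in one
dimension: M(lambda, mu) = E_{x ~ N(mu, sigma^2)} [tanh(lambda x / sigma^2) x],
with the expectation written as a Lebesgue integral against the normal density
(normal_density mu sigma has standard deviation sigma).\<close>
definition EM_M :: "real \<Rightarrow> real \<Rightarrow> real \<Rightarrow> real" where
  "EM_M \<sigma> lam \<mu> = (\<integral>x. tanh (lam * x / \<sigma>\<^sup>2) * x * normal_density \<mu> \<sigma> x \<partial>lborel)"

definition EM_kappa :: "real \<Rightarrow> real \<Rightarrow> real \<Rightarrow> real" where
  "EM_kappa \<sigma> \<mu> lam = exp (- (min lam \<mu>)\<^sup>2 / (2 * \<sigma>\<^sup>2))"

end

theory Submission
  imports Defs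
begin

lemma ms[measurable]: "(sinh::real\<Rightarrow>real) \<in> borel_measurable borel"
  by (intro borel_measurable_continuous_onI continuous_intros)
lemma mc[measurable]: "(cosh::real\<Rightarrow>real) \<in> borel_measurable borel"
  by (intro borel_measurable_continuous_onI continuous_intros)
lemma mt[measurable]: "(tanh::real\<Rightarrow>real) \<in> borel_measurable borel"
  by (intro borel_measurable_continuous_onI continuous_intros) auto

lemma one_minus_tanh: "1 - tanh (u::real) = exp (-u) / cosh u"
proof -
  have "cosh u > 0" by (rule cosh_real_pos)
  then have "1 - tanh u = (cosh u - sinh u) / cosh u" by (simp add: tanh_def field_simps)
  then show ?thesis by (simp add: cosh_minus_sinh)
qed

lemma nd_shift:
  assumes "\<sigma> > 0"
  shows "normal_density m \<sigma> x = normal_density 0 \<sigma> x * exp (-m\<^sup>2/(2*\<sigma>\<^sup>2)) * exp (m*x/\<sigma>\<^sup>2)"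
proof -
  have eq: "-(x - m)\<^sup>2/(2*\<sigma>\<^sup>2) = -(x - 0)\<^sup>2/(2*\<sigma>\<^sup>2) + -m\<^sup>2/(2*\<sigma>\<^sup>2) + m*x/\<sigma>\<^sup>2"
    using assms by (simp add: field_simps power2_eq_square)
  show ?thesis unfolding normal_density_def eq exp_add by (simp only: mult.assoc)
qed

lemma F_eq:
  assumes "\<sigma> > 0"
  shows "(1 - tanh (l*x/\<sigma>\<^sup>2)) * x * normal_density m \<sigma> x =
    exp (-m\<^sup>2/(2*\<sigma>\<^sup>2)) * x * normal_density 0 \<sigma> x / cosh (l*x/\<sigma>\<^sup>2) * exp ((m-l)*x/\<sigma>\<^sup>2)"
proof -
  have e: "exp (-(l*x/\<sigma>\<^sup>2)) * exp (m*x/\<sigma>\<^sup>2) = exp ((m-l)*x/\<sigma>\<^sup>2)"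
    using assms by (simp add: exp_add[symmetric] field_simps)
  have e2: "exp (m*x/\<sigma>\<^sup>2) * exp (-(l*x/\<sigma>\<^sup>2)) = exp ((m*x - l*x)/\<sigma>\<^sup>2)"
    using e by (simp add: algebra_simps diff_divide_distrib)
  show ?thesis unfolding one_minus_tanh nd_shift[OF assms, of m x]
    using e e2 by (simp add: field_simps)
qed

lemma sinh_le_mult_cosh:
  assumes "(y::real) \<ge> 0" shows "sinh y \<le> y * cosh y"
proof -
  have "(\<lambda>y. y * cosh y - sinh y) 0 \<le> (\<lambda>y. y * cosh y - sinh y) y"
  proof (rule DERIV_nonneg_imp_nondecreasing[OF assms])
    fix z :: real assume "0 \<le> z" "z \<le> y"
    show "\<exists>d. ((\<lambda>y. y * cosh y - sinh y) has_real_derivative d) (at z) \<and> 0 \<le> d"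
      apply (rule exI[of _ "z * sinh z"])
      apply (rule conjI)
       apply (rule derivative_eq_intros | simp)+
      using \<open>0 \<le> z\<close> by (simp add: sinh_real_nonneg_iff)
  qed
  then show ?thesis by simp
qed

lemma abs_sinh_le:
  fixes a b z :: real
  assumes "0 \<le> b" "b \<le> a"
  shows "\<bar>sinh (b*z)\<bar> \<le> b * \<bar>z\<bar> * cosh (a*z)"
proof -
  have s: "\<bar>sinh (b*z)\<bar> = sinh (b*\<bar>z\<bar>)"
  proof (cases "z \<ge> 0")
    case True
    then have "0 \<le> b*z" using assms by (simp add: mult_nonneg_nonneg)
    then have "0 \<le> sinh (b*z)" by (simp add: sinh_real_nonneg_iff)
    then show ?thesis using True by simp
  next
    case False
    then have "b*z \<le> 0" using assms by (simp add: mult_nonneg_nonpos)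
    then have "sinh (b*z) \<le> 0" by (simp add: sinh_real_nonpos_iff)
    moreover have "b*\<bar>z\<bar> = -(b*z)" using False by simp
    ultimately show ?thesis by simp
  qed
  have c1: "cosh (a*z) = cosh (a*\<bar>z\<bar>)"
    by (cases "z \<ge> 0") auto
  have c2: "cosh (b*\<bar>z\<bar>) \<le> cosh (a*\<bar>z\<bar>)"
    using assms by (simp add: cosh_real_nonneg_le_iff mult_right_mono)
  have "sinh (b*\<bar>z\<bar>) \<le> b*\<bar>z\<bar> * cosh (b*\<bar>z\<bar>)"
    using assms by (intro sinh_le_mult_cosh) simp
  also have "\<dots> \<le> b*\<bar>z\<bar> * cosh (a*\<bar>z\<bar>)"
    using assms c2 by (intro mult_left_mono) auto
  finally show ?thesis unfolding s c1 .
qed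

definition GG :: "real \<Rightarrow> real \<Rightarrow> real \<Rightarrow> real \<Rightarrow> real" where
  "GG \<sigma> l m x = exp (-m\<^sup>2/(2*\<sigma>\<^sup>2)) * x * normal_density 0 \<sigma> x / cosh (l*x/\<sigma>\<^sup>2) * sinh ((m-l)*x/\<sigma>\<^sup>2)"

lemma GG_meas[measurable]: "GG \<sigma> l m \<in> borel_measurable borel"
  unfolding GG_def by measurable

lemma key:
  assumes s: "\<sigma> > 0"
  shows "m - (\<integral>x. tanh (l * x / \<sigma>\<^sup>2) * x * normal_density m \<sigma> x \<partial>lborel) = (\<integral>x. GG \<sigma> l m x \<partial>lborel)"
proof -
  define F where "F x = (1 - tanh (l*x/\<sigma>\<^sup>2)) * x * normal_density m \<sigma> x" for x
  have i1: "integrable lborel (\<lambda>x. normal_density m \<sigma> x * x)"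
    by (rule integrable_normal_moment_nz_1[OF s])
  have i2: "integrable lborel (\<lambda>x. tanh (l * x / \<sigma>\<^sup>2) * x * normal_density m \<sigma> x)"
  proof (rule Bochner_Integration.integrable_bound[OF i1])
    show "(\<lambda>x. tanh (l * x / \<sigma>\<^sup>2) * x * normal_density m \<sigma> x) \<in> borel_measurable lborel" by measurable
    show "AE x in lborel. norm (tanh (l * x / \<sigma>\<^sup>2) * x * normal_density m \<sigma> x) \<le> norm (normal_density m \<sigma> x * x)"
    proof (rule AE_I2)
      fix x
      have "\<bar>tanh (l * x / \<sigma>\<^sup>2)\<bar> \<le> 1" using tanh_real_lt_1 tanh_real_gt_neg1 by (simp add: abs_le_iff less_imp_le)
      then have "\<bar>tanh (l * x / \<sigma>\<^sup>2)\<bar> * (\<bar>x\<bar> * normal_density m \<sigma> x) \<le> 1 * (\<bar>x\<bar> * normal_density m \<sigma> x)"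
        by (intro mult_right_mono) auto
      then show "norm (tanh (l * x / \<sigma>\<^sup>2) * x * normal_density m \<sigma> x) \<le> norm (normal_density m \<sigma> x * x)"
        by (simp add: abs_mult mult_ac)
    qed
  qed
  have Fd: "F = (\<lambda>x. normal_density m \<sigma> x * x - tanh (l * x / \<sigma>\<^sup>2) * x * normal_density m \<sigma> x)"
    unfolding F_def by (auto simp: algebra_simps)
  have iF: "integrable lborel F" unfolding Fd by (intro Bochner_Integration.integrable_diff i1 i2)
  have IF: "(\<integral>x. F x \<partial>lborel) = m - (\<integral>x. tanh (l * x / \<sigma>\<^sup>2) * x * normal_density m \<sigma> x \<partial>lborel)"
    unfolding Fd using i1 i2 by (simp add: integral_diff integral_normal_moment_nz_1[OF s])
  have iF': "integrable lborel (\<lambda>x. F (-x))"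
    using lborel_integrable_real_affine[OF iF, of "-1" 0] by simp
  have IF': "(\<integral>x. F (-x) \<partial>lborel) = (\<integral>x. F x \<partial>lborel)"
    using lborel_integral_real_affine[of "-1" F 0] by simp
  have pt: "GG \<sigma> l m x = (F x + F (-x)) / 2" for x
  proof -
    define K where "K = exp (-m\<^sup>2/(2*\<sigma>\<^sup>2)) * x * normal_density 0 \<sigma> x / cosh (l*x/\<sigma>\<^sup>2)"
    have a: "F x = K * exp ((m-l)*x/\<sigma>\<^sup>2)" unfolding F_def K_def F_eq[OF s] by simp
    have b: "F (-x) = - K * exp (-((m-l)*x/\<sigma>\<^sup>2))" unfolding F_def K_def F_eq[OF s]
      by (simp add: normal_density_def)
    show ?thesis unfolding a b GG_def K_def[symmetric] sinh_def by (simp add: field_simps)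
  qed
  have "(\<integral>x. GG \<sigma> l m x \<partial>lborel) = (\<integral>x. (F x + F (-x)) / 2 \<partial>lborel)"
    by (simp add: pt)
  also have "\<dots> = ((\<integral>x. F x \<partial>lborel) + (\<integral>x. F (-x) \<partial>lborel)) / 2"
    using iF iF' by simp
  also have "\<dots> = (\<integral>x. F x \<partial>lborel)" using IF' by simp
  finally show ?thesis using IF by simp
qed

lemma exp_nd:
  assumes s: "\<sigma> > 0"
  shows "exp (c*x) * normal_density 0 \<sigma> x * x = exp (c\<^sup>2*\<sigma>\<^sup>2/2) * (normal_density (c*\<sigma>\<^sup>2) \<sigma> x * x)"
proof -
  have "normal_density (c*\<sigma>\<^sup>2) \<sigma> x = normal_density 0 \<sigma> x * exp (-(c*\<sigma>\<^sup>2)\<^sup>2/(2*\<sigma>\<^sup>2)) * exp (c*\<sigma>\<^sup>2*x/\<sigma>\<^sup>2)"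
    by (rule nd_shift[OF s])
  also have "-(c*\<sigma>\<^sup>2)\<^sup>2/(2*\<sigma>\<^sup>2) = -(c\<^sup>2*\<sigma>\<^sup>2/2)" using s by (simp add: field_simps power2_eq_square)
  also have "c*\<sigma>\<^sup>2*x/\<sigma>\<^sup>2 = c*x" using s by simp
  finally have "normal_density (c*\<sigma>\<^sup>2) \<sigma> x = normal_density 0 \<sigma> x * exp (-(c\<^sup>2*\<sigma>\<^sup>2/2)) * exp (c*x)" .
  then show ?thesis by (simp add: exp_minus field_simps)
qed

lemma exp_nd_int:
  assumes s: "\<sigma> > 0"
  shows "integrable lborel (\<lambda>x. exp (c*x) * normal_density 0 \<sigma> x * x)"
    "(\<integral>x. exp (c*x) * normal_density 0 \<sigma> x * x \<partial>lborel) = exp (c\<^sup>2*\<sigma>\<^sup>2/2) * (c*\<sigma>\<^sup>2)"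
  unfolding exp_nd[OF s]
  using integrable_normal_moment_nz_1[OF s] integral_normal_moment_nz_1[OF s] by auto

lemma second_moment:
  assumes s: "\<sigma> > 0"
  shows "integrable lborel (\<lambda>x. normal_density 0 \<sigma> x * x\<^sup>2)"
    "(\<integral>x. normal_density 0 \<sigma> x * x\<^sup>2 \<partial>lborel) = \<sigma>\<^sup>2"
  using integrable_normal_moment[OF s, of 0 2] integral_normal_moment_even[OF s, of 0 1]
  by (auto simp: power2_eq_square)

lemma bound_ge:
  assumes s: "\<sigma> > 0" and m: "m > 0" and l: "l \<ge> m"
  shows "\<bar>\<integral>x. GG \<sigma> l m x \<partial>lborel\<bar> \<le> exp (-m\<^sup>2/(2*\<sigma>\<^sup>2)) * (l - m)"
    "(\<integral>x. GG \<sigma> l m x \<partial>lborel) \<le> 0"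
proof -
  define E where "E = exp (-m\<^sup>2/(2*\<sigma>\<^sup>2))"
  define b where "b = (l-m)/\<sigma>\<^sup>2"
  define H where "H x = E * b * (normal_density 0 \<sigma> x * x\<^sup>2)" for x
  have b0: "b \<ge> 0" using l s by (simp add: b_def)
  have ba: "b \<le> l/\<sigma>\<^sup>2" using m s by (simp add: b_def divide_right_mono)
  have E0: "E > 0" by (simp add: E_def)
  have iH: "integrable lborel H" unfolding H_def using second_moment(1)[OF s] by simp
  have IH: "(\<integral>x. H x \<partial>lborel) = E * (l - m)"
    unfolding H_def using second_moment[OF s] s by (simp add: b_def)
  have pt: "\<bar>GG \<sigma> l m x\<bar> \<le> H x" for x
  proof -
    have "(m-l)*x/\<sigma>\<^sup>2 = -(b*x)" using s by (simp add: b_def field_simps)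
    then have sn: "sinh ((m-l)*x/\<sigma>\<^sup>2) = - sinh (b*x)" by simp
    have ca: "cosh (l*x/\<sigma>\<^sup>2) = cosh ((l/\<sigma>\<^sup>2)*x)" by simp
    have cpos: "cosh (l*x/\<sigma>\<^sup>2) > 0" by (rule cosh_real_pos)
    have "\<bar>sinh (b*x)\<bar> \<le> b * \<bar>x\<bar> * cosh (l*x/\<sigma>\<^sup>2)"
      unfolding ca by (rule abs_sinh_le[OF b0 ba])
    then have q: "\<bar>sinh (b*x)\<bar> / cosh (l*x/\<sigma>\<^sup>2) \<le> b * \<bar>x\<bar>"
      using cpos by (simp add: divide_le_eq)
    have "\<bar>GG \<sigma> l m x\<bar> = E * \<bar>x\<bar> * normal_density 0 \<sigma> x * (\<bar>sinh (b*x)\<bar> / cosh (l*x/\<sigma>\<^sup>2))"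
      unfolding GG_def sn E_def[symmetric] using cpos E0 by (simp add: abs_mult)
    also have "\<dots> \<le> E * \<bar>x\<bar> * normal_density 0 \<sigma> x * (b * \<bar>x\<bar>)"
      using q E0 by (intro mult_left_mono) auto
    also have "\<dots> = H x" unfolding H_def by (simp add: power2_eq_square abs_mult_self_eq algebra_simps)
    finally show ?thesis .
  qed
  have iG: "integrable lborel (GG \<sigma> l m)"
    by (rule Bochner_Integration.integrable_bound[OF iH]) (use pt in \<open>auto intro!: AE_I2 order_trans[OF _ abs_ge_self]\<close>)
  have "\<bar>\<integral>x. GG \<sigma> l m x \<partial>lborel\<bar> \<le> (\<integral>x. H x \<partial>lborel)"
    by (rule integral_abs_bound_integral[OF iG iH pt])
  then show "\<bar>\<integral>x. GG \<sigma> l m x \<partial>lborel\<bar> \<le> exp (-m\<^sup>2/(2*\<sigma>\<^sup>2)) * (l - m)"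
    using IH by (simp add: E_def)
  have np: "GG \<sigma> l m x \<le> 0" for x
  proof -
    have "x * sinh ((m-l)*x/\<sigma>\<^sup>2) \<le> 0"
    proof (cases "x \<ge> 0")
      case True
      then have "(m-l)*x \<le> 0" using l by (intro mult_nonpos_nonneg) auto
      then have "(m-l)*x/\<sigma>\<^sup>2 \<le> 0" using s by (intro divide_nonpos_pos) auto
      then show ?thesis using True by (simp add: mult_nonneg_nonpos sinh_real_nonpos_iff)
    next
      case False
      then have "(m-l)*x \<ge> 0" using l by (intro mult_nonpos_nonpos) auto
      then have "(m-l)*x/\<sigma>\<^sup>2 \<ge> 0" using s by (intro divide_nonneg_pos) auto
      then show ?thesis using False by (simp add: mult_nonpos_nonneg sinh_real_nonneg_iff)
    qed
    moreover have "exp (-m\<^sup>2/(2*\<sigma>\<^sup>2)) * normal_density 0 \<sigma> x / cosh (l*x/\<sigma>\<^sup>2) \<ge> 0"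
      using cosh_real_pos[of "l*x/\<sigma>\<^sup>2"] by simp
    ultimately have "exp (-m\<^sup>2/(2*\<sigma>\<^sup>2)) * normal_density 0 \<sigma> x / cosh (l*x/\<sigma>\<^sup>2) * (x * sinh ((m-l)*x/\<sigma>\<^sup>2)) \<le> 0"
      by (metis mult_nonneg_nonpos)
    then show ?thesis unfolding GG_def by (simp add: mult_ac)
  qed
  have "0 \<le> (\<integral>x. - GG \<sigma> l m x \<partial>lborel)"
    by (rule integral_nonneg_AE) (use np in auto)
  then show "(\<integral>x. GG \<sigma> l m x \<partial>lborel) \<le> 0" by simp
qed

lemma bound_lt:
  assumes s: "\<sigma> > 0" and l0: "0 \<le> l" and l: "l < m"
  shows "\<bar>\<integral>x. GG \<sigma> l m x \<partial>lborel\<bar> \<le> exp (-l\<^sup>2/(2*\<sigma>\<^sup>2)) * (m - l)"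
proof -
  define E where "E = exp (-m\<^sup>2/(2*\<sigma>\<^sup>2))"
  define b where "b = (m-l)/\<sigma>\<^sup>2"
  define H where "H x = E * ((exp (b*x) * normal_density 0 \<sigma> x * x - exp ((-b)*x) * normal_density 0 \<sigma> x * x)/2)" for x
  have b0: "b > 0" using l s by (simp add: b_def)
  have E0: "E > 0" by (simp add: E_def)
  have iH: "integrable lborel H" unfolding H_def
    using exp_nd_int(1)[OF s, of b] exp_nd_int(1)[OF s, of "-b"] by simp
  have IH: "(\<integral>x. H x \<partial>lborel) = E * (exp (b\<^sup>2*\<sigma>\<^sup>2/2) * (b*\<sigma>\<^sup>2))"
    unfolding H_def
    using exp_nd_int[OF s, of b] exp_nd_int[OF s, of "-b"] by simp
  have pt: "\<bar>GG \<sigma> l m x\<bar> \<le> H x" for x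
  proof -
    have arg: "(m-l)*x/\<sigma>\<^sup>2 = b*x" by (simp add: b_def)
    have xs: "x * sinh (b*x) \<ge> 0"
    proof (cases "x \<ge> 0")
      case True
      then have "0 \<le> b*x" using b0 by simp
      then show ?thesis using True by (simp add: sinh_real_nonneg_iff)
    next
      case False
      then have "b*x \<le> 0" using b0 by (simp add: mult_pos_neg less_imp_le)
      then have "sinh (b*x) \<le> 0" by (simp add: sinh_real_nonpos_iff)
      then show ?thesis using False by (simp add: mult_nonpos_nonpos)
    qed
    have cpos: "cosh (l*x/\<sigma>\<^sup>2) \<ge> 1" by (rule cosh_real_ge_1)
    have w: "0 \<le> E * normal_density 0 \<sigma> x * (x * sinh (b*x))" using E0 xs by simp
    have "\<bar>GG \<sigma> l m x\<bar> = E * normal_density 0 \<sigma> x * (x * sinh (b*x)) / cosh (l*x/\<sigma>\<^sup>2)"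
    proof -
      have "GG \<sigma> l m x = E * normal_density 0 \<sigma> x * (x * sinh (b*x)) / cosh (l*x/\<sigma>\<^sup>2)"
        unfolding GG_def arg E_def[symmetric] by (simp add: mult_ac)
      moreover have "E * normal_density 0 \<sigma> x * (x * sinh (b*x)) / cosh (l*x/\<sigma>\<^sup>2) \<ge> 0"
        using cpos w by simp
      ultimately show ?thesis by (simp only: abs_of_nonneg)
    qed
    also have "\<dots> \<le> E * normal_density 0 \<sigma> x * (x * sinh (b*x))"
      using cpos w by (simp add: divide_le_eq mult_le_cancel_left1 mult_le_cancel_left2 mult_left_le)
    also have "\<dots> = H x" unfolding H_def sinh_def by (simp add: field_simps)
    finally show ?thesis .
  qed
  have iG: "integrable lborel (GG \<sigma> l m)"
    by (rule Bochner_Integration.integrable_bound[OF iH]) (use pt in \<open>auto intro!: AE_I2 order_trans[OF _ abs_ge_self]\<close>)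
  have "\<bar>\<integral>x. GG \<sigma> l m x \<partial>lborel\<bar> \<le> (\<integral>x. H x \<partial>lborel)"
    by (rule integral_abs_bound_integral[OF iG iH pt])
  also have "\<dots> = exp (-m\<^sup>2/(2*\<sigma>\<^sup>2) + (m-l)\<^sup>2/(2*\<sigma>\<^sup>2)) * (m-l)"
  proof -
    have h1: "b\<^sup>2*\<sigma>\<^sup>2/2 = (m-l)\<^sup>2/(2*\<sigma>\<^sup>2)" "b*\<sigma>\<^sup>2 = m-l" using s by (simp_all add: b_def power2_eq_square field_simps)
    show ?thesis unfolding IH E_def h1 exp_add by (simp only: mult.assoc)
  qed
  also have "\<dots> \<le> exp (-l\<^sup>2/(2*\<sigma>\<^sup>2)) * (m - l)"
  proof (rule mult_right_mono)
    have "l * (l - m) \<le> 0" using l0 l by (simp add: mult_nonneg_nonpos)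
    then have "-m\<^sup>2 + (m-l)\<^sup>2 \<le> -l\<^sup>2" by (simp add: power2_eq_square algebra_simps)
    then have "(-m\<^sup>2 + (m-l)\<^sup>2)/(2*\<sigma>\<^sup>2) \<le> -l\<^sup>2/(2*\<sigma>\<^sup>2)" using s by (intro divide_right_mono) auto
    then show "exp (-m\<^sup>2/(2*\<sigma>\<^sup>2) + (m-l)\<^sup>2/(2*\<sigma>\<^sup>2)) \<le> exp (-l\<^sup>2/(2*\<sigma>\<^sup>2))"
      by (simp add: add_divide_distrib diff_divide_distrib)
  qed (use l in auto)
  finally show ?thesis .
qed

lemma step:
  assumes s: "\<sigma> > 0" and m: "\<mu> > 0" and l: "l > 0"
  shows "\<bar>EM_M \<sigma> l \<mu> - \<mu>\<bar> \<le> EM_kappa \<sigma> \<mu> l * \<bar>l - \<mu>\<bar> \<and> min l \<mu> \<le> min (EM_M \<sigma> l \<mu>) \<mu>"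
proof -
  have k: "\<mu> - EM_M \<sigma> l \<mu> = (\<integral>x. GG \<sigma> l \<mu> x \<partial>lborel)"
    unfolding EM_M_def by (rule key[OF s])
  show ?thesis
  proof (cases "l \<ge> \<mu>")
    case True
    note b = bound_ge[OF s m True]
    have "EM_kappa \<sigma> \<mu> l = exp (-\<mu>\<^sup>2/(2*\<sigma>\<^sup>2))" using True by (simp add: EM_kappa_def min_def)
    moreover have "\<bar>EM_M \<sigma> l \<mu> - \<mu>\<bar> = \<bar>\<integral>x. GG \<sigma> l \<mu> x \<partial>lborel\<bar>" using k by linarith
    moreover have "EM_M \<sigma> l \<mu> \<ge> \<mu>" using k b(2) by linarith
    ultimately show ?thesis using b(1) True by simp
  next
    case False
    note b = bound_lt[OF s less_imp_le[OF l], of \<mu>]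
    have ke: "EM_kappa \<sigma> \<mu> l = exp (-l\<^sup>2/(2*\<sigma>\<^sup>2))" using False by (simp add: EM_kappa_def min_def)
    have k1: "exp (-l\<^sup>2/(2*\<sigma>\<^sup>2)) \<le> 1" by simp
    have a: "\<bar>EM_M \<sigma> l \<mu> - \<mu>\<bar> \<le> exp (-l\<^sup>2/(2*\<sigma>\<^sup>2)) * (\<mu> - l)"
      using k b False by simp
    also have "\<dots> \<le> \<mu> - l" using k1 False by (simp add: mult_left_le_one_le)
    finally have "EM_M \<sigma> l \<mu> \<ge> l" by linarith
    then show ?thesis using a ke False by simp
  qed
qed

theorem theorem1:
  fixes \<sigma> \<mu> :: real and lam :: "nat \<Rightarrow> real"
  assumes "\<sigma> > 0" and "\<mu> > 0"
    and "lam 0 > 0"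
    and "\<And>t. lam (Suc t) = EM_M \<sigma> (lam t) \<mu>"
  shows "(\<forall>t. \<bar>lam (Suc t) - \<mu>\<bar> \<le> EM_kappa \<sigma> \<mu> (lam t) * \<bar>lam t - \<mu>\<bar>)
         \<and> decseq (\<lambda>t. EM_kappa \<sigma> \<mu> (lam t))"
proof -
  have mn: "min (lam 0) \<mu> \<le> min (lam t) \<mu>" for t
  proof (induction t)
    case 0 then show ?case by simp
  next
    case (Suc t)
    have "lam t > 0" using Suc assms(2,3) by linarith
    then have "min (lam t) \<mu> \<le> min (lam (Suc t)) \<mu>" using step[OF assms(1,2)] assms(4) by simp
    then show ?case using Suc by linarith
  qed
  have pos: "lam t > 0" for t using mn[of t] assms(2,3) by linarith
  have st: "\<bar>lam (Suc t) - \<mu>\<bar> \<le> EM_kappa \<sigma> \<mu> (lam t) * \<bar>lam t - \<mu>\<bar> \<and> min (lam t) \<mu> \<le> min (lam (Suc t)) \<mu>" for t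
    using step[OF assms(1,2) pos[of t]] assms(4) by simp
  have "EM_kappa \<sigma> \<mu> (lam (Suc t)) \<le> EM_kappa \<sigma> \<mu> (lam t)" for t
  proof -
    have p: "0 < min (lam t) \<mu>" using pos[of t] assms(2) by simp
    have "(min (lam t) \<mu>)\<^sup>2 \<le> (min (lam (Suc t)) \<mu>)\<^sup>2"
      using st[of t] p by (intro power_mono) auto
    then have "-(min (lam (Suc t)) \<mu>)\<^sup>2/(2*\<sigma>\<^sup>2) \<le> -(min (lam t) \<mu>)\<^sup>2/(2*\<sigma>\<^sup>2)"
      using assms(1) by (intro divide_right_mono) auto
    then show ?thesis unfolding EM_kappa_def by simp
  qed
  then have "decseq (\<lambda>t. EM_kappa \<sigma> \<mu> (lam t))" by (rule decseq_SucI)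
  then show ?thesis using st by blast
qed

end
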